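(* Let $(\mathscr{G},\mathscr{H},\mathscr{F},\iota_v,\varphi_p)$ be an equivariant sheaf of right cosets on a finite-dimensional real vector space $V$, let $\Lambda\subset V$ be a lattice, and let $p,q\ge 2$ be relatively prime natural numbers. Let $s\in\Gamma(V,\mathscr{F})$ and suppose there are $\Lambda$-periodic $A,B\in\Gamma(V,\mathscr{G})$ with $m_p^*(s)=As$ and $m_q^*(s)=Bs$. Then there is a modification $s'$ of $s$ at $0$ which is $\Lambda$-periodic, and this $s'$ also satisfies $m_p^*(s')=As'$ and $m_q^*(s')=Bs'$.
   Context: $V$ carries its classical topology. An equivariant sheaf of right cosets consists of: a sheaf of groups $\mathscr{G}$ on $V$, a subsheaf of subgroups $\mathscr{H}$, and the sheaf $\mathscr{F}=\mathscr{G}/\mathscr{H}$ of right cosets $g\mathscr{H}$ (a sheaf of pointed sets, the distinguished element $0_x$ of $\mathscr{F}_x$ being the trivial coset, with the left action of $\mathscr{G}$), such that: (Dis) for every open $U\subset V$ and $f\in\mathscr{G}(U)$ the set $\{x\in U: f_x\notin\mathscr{H}_x\}$ meets every compact subset of $U$ in a finite set; for every $v\in V$ there are sheaf isomorphisms $\mathscr{G}\simeq t_v^*\mathscr{G}$ ($t_v(x)=x+v$) inducing stalk isomorphisms $\iota_v:\mathscr{G}_x\to\mathscr{G}_{x+v}$ with $\iota_v\circ\iota_u=\iota_{u+v}$; for every real $p\ne0$ there are sheaf isomorphisms $\mathscr{G}\simeq m_p^*\mathscr{G}$ ($m_p(x)=px$) inducing $\varphi_p:\mathscr{G}_x\to\mathscr{G}_{px}$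 with $\varphi_q\circ\varphi_p=\varphi_{pq}$; all these isomorphisms map $\mathscr{H}$ onto $\mathscr{H}$ (hence act on $\mathscr{F}$); and $\iota_{pv}\circ\varphi_p=\varphi_p\circ\iota_v$ as maps $\mathscr{G}_x\to\mathscr{G}_{px+pv}$. For a global section $s$ of $\mathscr{F}$ (or $\mathscr{G}$) set $(m_p^*s)_x=\varphi_p(s_{x/p})$ and $(t_v^*s)_x=\iota_v(s_{x-v})$. A lattice is a discrete subgroup of $V$ spanning $V$; $s$ is $\Lambda$-periodic if $t_\lambda^*s=s$ for all $\lambda\in\Lambda$. A modification of $s$ at $0$ is a global section $s'$ of $\mathscr{F}$ whose restriction to $V\setminus\{0\}$ equals that of $s$. Example: $V=\mathbb{C}$, $\mathscr{G}=GL_r(\mathscr{M})$, $\mathscr{H}=GL_r(\mathscr{O})$ (meromorphic/holomorphic), with $\iota_v,\varphi_p$ given by composition with $t_v^{-1},m_p^{-1}$. *)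

theory Defs
  imports "HOL-Analysis.Analysis" "HOL-Algebra.Coset"
begin

text \<open>Sheaves on V are represented through their etale spaces: the stalk of
  the sheaf of groups at x is the group stk x (all stalks live in one ambient
  type 'g), and sec U f says that the function f is a section over the open set U
  (only the values of f on U matter).\<close>

definition sheaf_of_groups ::
  "('v::topological_space \<Rightarrow> 'g monoid) \<Rightarrow> ('v set \<Rightarrow> ('v \<Rightarrow> 'g) \<Rightarrow> bool) \<Rightarrow> bool" where
  "sheaf_of_groups stk sec \<longleftrightarrow>
     (\<forall>x. group (stk x)) \<and>
     (\<forall>U f. open U \<and> sec U f \<longrightarrow> (\<forall>x\<in>U. f x \<in> carrier (stk x))) \<and>
     (\<forall>U W f. open U \<and> open W \<and> W \<subseteq> U \<and> sec U f \<longrightarrow> sec W f) \<and>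
     (\<forall>U f g. open U \<and> sec U f \<and> (\<forall>x\<in>U. g x = f x) \<longrightarrow> sec U g) \<and>
     (\<forall>U f. open U \<and> (\<forall>x\<in>U. \<exists>W. open W \<and> x \<in> W \<and> W \<subseteq> U \<and> sec W f) \<longrightarrow> sec U f) \<and>
     (\<forall>x g. g \<in> carrier (stk x) \<longrightarrow> (\<exists>W f. open W \<and> x \<in> W \<and> sec W f \<and> f x = g)) \<and>
     (\<forall>U f g x. open U \<and> sec U f \<and> sec U g \<and> x \<in> U \<and> f x = g x \<longrightarrow>
        (\<exists>W. open W \<and> x \<in> W \<and> W \<subseteq> U \<and> (\<forall>y\<in>W. f y = g y))) \<and>
     (\<forall>U. open U \<longrightarrow> sec U (\<lambda>x. \<one>\<^bsub>stk x\<^esub>)) \<and>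
     (\<forall>U f g. open U \<and> sec U f \<and> sec U g \<longrightarrow> sec U (\<lambda>x. f x \<otimes>\<^bsub>stk x\<^esub> g x)) \<and>
     (\<forall>U f. open U \<and> sec U f \<longrightarrow> sec U (\<lambda>x. inv\<^bsub>stk x\<^esub> f x))"

text \<open>A subsheaf of subgroups, given by its stalks H x: the sections of the
  subsheaf over U are the sections of the sheaf with values in H.\<close>

definition subsheaf_of_subgroups ::
  "('v::topological_space \<Rightarrow> 'g monoid) \<Rightarrow> ('v set \<Rightarrow> ('v \<Rightarrow> 'g) \<Rightarrow> bool) \<Rightarrow> ('v \<Rightarrow> 'g set) \<Rightarrow> bool" where
  "subsheaf_of_subgroups stk sec H \<longleftrightarrow>
     (\<forall>x. subgroup (H x) (stk x)) \<and>
     (\<forall>x h. h \<in> H x \<longrightarrow> (\<exists>W f. open W \<and> x \<in> W \<and> sec W f \<and> f x = h \<and> (\<forall>y\<in>W. f y \<in> H y)))"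

text \<open>Sections over U of the quotient sheaf F = G/H (stalk F_x = cosets g H_x):
  locally liftable to sections of G.\<close>

definition coset_section ::
  "('v::topological_space \<Rightarrow> 'g monoid) \<Rightarrow> ('v set \<Rightarrow> ('v \<Rightarrow> 'g) \<Rightarrow> bool) \<Rightarrow> ('v \<Rightarrow> 'g set)
    \<Rightarrow> 'v set \<Rightarrow> ('v \<Rightarrow> 'g set) \<Rightarrow> bool" where
  "coset_section stk sec H U s \<longleftrightarrow>
     (\<forall>x\<in>U. \<exists>W f. open W \<and> x \<in> W \<and> W \<subseteq> U \<and> sec W f \<and>
        (\<forall>y\<in>W. s y = l_coset (stk y) (f y) (H y)))"

definition equivariant_coset_sheaf ::
  "('v::euclidean_space \<Rightarrow> 'g monoid) \<Rightarrow> ('v set \<Rightarrow> ('v \<Rightarrow> 'g) \<Rightarrow> bool) \<Rightarrow> ('v \<Rightarrow> 'g set)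
    \<Rightarrow> ('v \<Rightarrow> 'v \<Rightarrow> 'g \<Rightarrow> 'g) \<Rightarrow> (real \<Rightarrow> 'v \<Rightarrow> 'g \<Rightarrow> 'g) \<Rightarrow> bool" where
  "equivariant_coset_sheaf stk sec H \<iota> \<phi> \<longleftrightarrow>
     sheaf_of_groups stk sec \<and> subsheaf_of_subgroups stk sec H \<and>
     \<comment> \<open>(Dis)\<close>
     (\<forall>U f. open U \<and> sec U f \<longrightarrow>
        (\<forall>K. compact K \<and> K \<subseteq> U \<longrightarrow> finite ({x\<in>U. f x \<notin> H x} \<inter> K))) \<and>
     \<comment> \<open>translations\<close>
     (\<forall>v x. \<iota> v x \<in> iso (stk x) (stk (x + v))) \<and>
     (\<forall>v U f. open U \<and> sec U f \<longrightarrow> sec ((\<lambda>y. y + v) ` U) (\<lambda>y. \<iota> v (y - v) (f (y - v)))) \<and>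
     (\<forall>u v x g. g \<in> carrier (stk x) \<longrightarrow> \<iota> v (x + u) (\<iota> u x g) = \<iota> (u + v) x g) \<and>
     (\<forall>v x. \<iota> v x ` H x = H (x + v)) \<and>
     \<comment> \<open>dilations\<close>
     (\<forall>p x. p \<noteq> 0 \<longrightarrow> \<phi> p x \<in> iso (stk x) (stk (p *\<^sub>R x))) \<and>
     (\<forall>p U f. p \<noteq> 0 \<and> open U \<and> sec U f \<longrightarrow>
        sec ((\<lambda>y. p *\<^sub>R y) ` U) (\<lambda>y. \<phi> p (inverse p *\<^sub>R y) (f (inverse p *\<^sub>R y)))) \<and>
     (\<forall>p q x g. p \<noteq> 0 \<and> q \<noteq> 0 \<and> g \<in> carrier (stk x) \<longrightarrow>
        \<phi> q (p *\<^sub>R x) (\<phi> p x g) = \<phi> (p * q) x g) \<and>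
     (\<forall>p x. p \<noteq> 0 \<longrightarrow> \<phi> p x ` H x = H (p *\<^sub>R x)) \<and>
     \<comment> \<open>compatibility\<close>
     (\<forall>p v x g. p \<noteq> 0 \<and> g \<in> carrier (stk x) \<longrightarrow>
        \<iota> (p *\<^sub>R v) (p *\<^sub>R x) (\<phi> p x g) = \<phi> p (x + v) (\<iota> v x g))"

definition lattice :: "'v::euclidean_space set \<Rightarrow> bool" where
  "lattice L \<longleftrightarrow> 0 \<in> L \<and> (\<forall>a\<in>L. \<forall>b\<in>L. a - b \<in> L) \<and>
     (\<forall>x\<in>L. \<exists>e>0. \<forall>y\<in>L. dist y x < e \<longrightarrow> y = x) \<and> span L = UNIV"

definition pull_m_F :: "(real \<Rightarrow> 'v::real_vector \<Rightarrow> 'g \<Rightarrow> 'g) \<Rightarrow> real \<Rightarrow> ('v \<Rightarrow> 'g set) \<Rightarrow> 'v \<Rightarrow> 'g set" where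
  "pull_m_F \<phi> p s = (\<lambda>x. \<phi> p (inverse p *\<^sub>R x) ` s (inverse p *\<^sub>R x))"

definition pull_t_F :: "('v::real_vector \<Rightarrow> 'v \<Rightarrow> 'g \<Rightarrow> 'g) \<Rightarrow> 'v \<Rightarrow> ('v \<Rightarrow> 'g set) \<Rightarrow> 'v \<Rightarrow> 'g set" where
  "pull_t_F \<iota> v s = (\<lambda>x. \<iota> v (x - v) ` s (x - v))"

definition pull_t_G :: "('v::real_vector \<Rightarrow> 'v \<Rightarrow> 'g \<Rightarrow> 'g) \<Rightarrow> 'v \<Rightarrow> ('v \<Rightarrow> 'g) \<Rightarrow> 'v \<Rightarrow> 'g" where
  "pull_t_G \<iota> v A = (\<lambda>x. \<iota> v (x - v) (A (x - v)))"

definition act_F :: "('v \<Rightarrow> 'g monoid) \<Rightarrow> ('v \<Rightarrow> 'g) \<Rightarrow> ('v \<Rightarrow> 'g set) \<Rightarrow> 'v \<Rightarrow> 'g set" where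
  "act_F stk A s = (\<lambda>x. l_coset (stk x) (A x) (s x))"

end

theory Submission
  imports Defs
begin


lemma hom_lcos:
  assumes "h \<in> hom G G'" "a \<in> carrier G" "X \<subseteq> carrier G"
  shows "h ` (l_coset G a X) = l_coset G' (h a) (h ` X)"
  using assms unfolding l_coset_def by (force simp: hom_mult subset_iff)

lemma lcos_cancel:
  assumes "group G" "a \<in> carrier G" "X \<subseteq> carrier G" "Y \<subseteq> carrier G"
    "l_coset G a X = l_coset G a Y"
  shows "X = Y"
proof -
  interpret G: group G by fact
  have ia: "inv\<^bsub>G\<^esub> a \<in> carrier G" using assms(2) by simp
  have "l_coset G (inv\<^bsub>G\<^esub> a) (l_coset G a X) = l_coset G (inv\<^bsub>G\<^esub> a) (l_coset G a Y)" using assms(5) by simp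
  hence "l_coset G (inv\<^bsub>G\<^esub> a \<otimes>\<^bsub>G\<^esub> a) X = l_coset G (inv\<^bsub>G\<^esub> a \<otimes>\<^bsub>G\<^esub> a) Y"
    using G.lcos_m_assoc[OF assms(3) ia assms(2)] G.lcos_m_assoc[OF assms(4) ia assms(2)] by simp
  hence "l_coset G \<one>\<^bsub>G\<^esub> X = l_coset G \<one>\<^bsub>G\<^esub> Y" using G.l_inv[OF assms(2)] by simp
  thus ?thesis using G.lcos_mult_one[OF assms(3)] G.lcos_mult_one[OF assms(4)] by simp
qed

lemma lcos_H_iff1:
  assumes "group G" "subgroup K G" "g \<in> carrier G" "l_coset G g K = K"
  shows "g \<in> K"
proof -
  interpret G: group G by fact
  have "g \<otimes>\<^bsub>G\<^esub> \<one>\<^bsub>G\<^esub> \<in> l_coset G g K" unfolding l_coset_def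
    using subgroup.one_closed[OF assms(2)] by blast
  thus "g \<in> K" using G.r_one[OF assms(3)] assms(4) by simp
qed

lemma lcos_H_iff2:
  assumes "group G" "subgroup K G" "g \<in> K"
  shows "l_coset G g K = K"
proof -
  interpret G: group G by fact
  have gc: "g \<in> carrier G" using subgroup.mem_carrier[OF assms(2) assms(3)] .
  have 1: "l_coset G g K \<subseteq> K"
  proof
    fix x assume "x \<in> l_coset G g K"
    then obtain h where "h \<in> K" "x = g \<otimes>\<^bsub>G\<^esub> h" unfolding l_coset_def by blast
    thus "x \<in> K" using subgroup.m_closed[OF assms(2) assms(3)] by blast
  qed
  have 2: "K \<subseteq> l_coset G g K"
  proof
    fix k assume k: "k \<in> K"
    have kc: "k \<in> carrier G" using subgroup.mem_carrier[OF assms(2) k] .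
    have "inv\<^bsub>G\<^esub> g \<otimes>\<^bsub>G\<^esub> k \<in> K"
      using subgroup.m_closed[OF assms(2) subgroup.m_inv_closed[OF assms(2) assms(3)] k] .
    moreover have "k = g \<otimes>\<^bsub>G\<^esub> (inv\<^bsub>G\<^esub> g \<otimes>\<^bsub>G\<^esub> k)"
      using gc kc by (simp add: G.m_assoc[symmetric])
    ultimately show "k \<in> l_coset G g K" unfolding l_coset_def by blast
  qed
  from 1 2 show ?thesis by blast
qed

lemma lcos_H_iff:
  assumes "group G" "subgroup K G" "g \<in> carrier G"
  shows "(l_coset G g K = K) \<longleftrightarrow> g \<in> K"
  using lcos_H_iff1[OF assms] lcos_H_iff2[OF assms(1,2)] by blast

lemma lcos_eq_of:
  assumes "group G" "subgroup K G" "a \<in> carrier G" "b \<in> carrier G" "inv\<^bsub>G\<^esub> b \<otimes>\<^bsub>G\<^esub> a \<in> K"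
  shows "l_coset G a K = l_coset G b K"
proof -
  interpret G: group G by fact
  have KC: "K \<subseteq> carrier G" using subgroup.subset[OF assms(2)] .
  have ib: "inv\<^bsub>G\<^esub> b \<in> carrier G" using assms by simp
  have ic: "inv\<^bsub>G\<^esub> b \<otimes>\<^bsub>G\<^esub> a \<in> carrier G" using assms(3,4) by simp
  have "b \<otimes>\<^bsub>G\<^esub> (inv\<^bsub>G\<^esub> b \<otimes>\<^bsub>G\<^esub> a) = a"
    using assms(3,4) by (simp add: G.m_assoc[symmetric])
  hence "l_coset G a K = l_coset G b (l_coset G (inv\<^bsub>G\<^esub> b \<otimes>\<^bsub>G\<^esub> a) K)"
    using G.lcos_m_assoc[OF KC assms(4) ic] by simp
  also have "l_coset G (inv\<^bsub>G\<^esub> b \<otimes>\<^bsub>G\<^esub> a) K = K" using lcos_H_iff[OF assms(1,2) ic] assms by simp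
  finally show ?thesis .
qed

locale ecs =
  fixes stk :: "'v::euclidean_space \<Rightarrow> 'g monoid"
    and sec :: "'v set \<Rightarrow> ('v \<Rightarrow> 'g) \<Rightarrow> bool"
    and H :: "'v \<Rightarrow> 'g set"
    and \<iota> :: "'v \<Rightarrow> 'v \<Rightarrow> 'g \<Rightarrow> 'g"
    and \<phi> :: "real \<Rightarrow> 'v \<Rightarrow> 'g \<Rightarrow> 'g"
  assumes eq: "equivariant_coset_sheaf stk sec H \<iota> \<phi>"
begin

lemma shf: "sheaf_of_groups stk sec" using eq unfolding equivariant_coset_sheaf_def by (elim conjE)

lemma shf_all: "(\<forall>x. group (stk x)) \<and>
     (\<forall>U f. open U \<and> sec U f \<longrightarrow> (\<forall>x\<in>U. f x \<in> carrier (stk x))) \<and>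
     (\<forall>U W f. open U \<and> open W \<and> W \<subseteq> U \<and> sec U f \<longrightarrow> sec W f) \<and>
     (\<forall>U f g. open U \<and> sec U f \<and> (\<forall>x\<in>U. g x = f x) \<longrightarrow> sec U g) \<and>
     (\<forall>U f. open U \<and> (\<forall>x\<in>U. \<exists>W. open W \<and> x \<in> W \<and> W \<subseteq> U \<and> sec W f) \<longrightarrow> sec U f) \<and>
     (\<forall>x g. g \<in> carrier (stk x) \<longrightarrow> (\<exists>W f. open W \<and> x \<in> W \<and> sec W f \<and> f x = g)) \<and>
     (\<forall>U f g x. open U \<and> sec U f \<and> sec U g \<and> x \<in> U \<and> f x = g x \<longrightarrow>
        (\<exists>W. open W \<and> x \<in> W \<and> W \<subseteq> U \<and> (\<forall>y\<in>W. f y = g y))) \<and>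
     (\<forall>U. open U \<longrightarrow> sec U (\<lambda>x. \<one>\<^bsub>stk x\<^esub>)) \<and>
     (\<forall>U f g. open U \<and> sec U f \<and> sec U g \<longrightarrow> sec U (\<lambda>x. f x \<otimes>\<^bsub>stk x\<^esub> g x)) \<and>
     (\<forall>U f. open U \<and> sec U f \<longrightarrow> sec U (\<lambda>x. inv\<^bsub>stk x\<^esub> f x))"
  using shf unfolding sheaf_of_groups_def .

lemma shf1: "\<forall>x. group (stk x)" using shf_all by (elim conjE)
lemma shf2: "\<forall>U f. open U \<and> sec U f \<longrightarrow> (\<forall>x\<in>U. f x \<in> carrier (stk x))" using shf_all by (elim conjE)
lemma shf3: "\<forall>U W f. open U \<and> open W \<and> W \<subseteq> U \<and> sec U f \<longrightarrow> sec W f" using shf_all by (elim conjE)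
lemma shf6: "\<forall>x g. g \<in> carrier (stk x) \<longrightarrow> (\<exists>W f. open W \<and> x \<in> W \<and> sec W f \<and> f x = g)" using shf_all by (elim conjE)
lemma shf9: "\<forall>U f g. open U \<and> sec U f \<and> sec U g \<longrightarrow> sec U (\<lambda>x. f x \<otimes>\<^bsub>stk x\<^esub> g x)" using shf_all by (elim conjE)
lemma shf10: "\<forall>U f. open U \<and> sec U f \<longrightarrow> sec U (\<lambda>x. inv\<^bsub>stk x\<^esub> f x)" using shf_all by (elim conjE)

lemma grp: "group (stk x)" using shf1 by simp

lemma sec_carr: "open U \<Longrightarrow> sec U f \<Longrightarrow> x \<in> U \<Longrightarrow> f x \<in> carrier (stk x)"
  using shf2 by blast

lemma sec_restr: "open U \<Longrightarrow> open W \<Longrightarrow> W \<subseteq> U \<Longrightarrow> sec U f \<Longrightarrow> sec W f"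
  using shf3 by blast

lemma sec_stalk: "g \<in> carrier (stk x) \<Longrightarrow> \<exists>W f. open W \<and> x \<in> W \<and> sec W f \<and> f x = g"
  using shf6 by blast

lemma sec_mult: "open U \<Longrightarrow> sec U f \<Longrightarrow> sec U g \<Longrightarrow> sec U (\<lambda>x. f x \<otimes>\<^bsub>stk x\<^esub> g x)"
  using shf9 by blast

lemma sec_inv: "open U \<Longrightarrow> sec U f \<Longrightarrow> sec U (\<lambda>x. inv\<^bsub>stk x\<^esub> f x)"
  using shf10 by blast

lemma eq_all: "subsheaf_of_subgroups stk sec H \<and>
     (\<forall>U f. open U \<and> sec U f \<longrightarrow>
        (\<forall>K. compact K \<and> K \<subseteq> U \<longrightarrow> finite ({x\<in>U. f x \<notin> H x} \<inter> K))) \<and>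
     (\<forall>v x. \<iota> v x \<in> iso (stk x) (stk (x + v))) \<and>
     (\<forall>u v x g. g \<in> carrier (stk x) \<longrightarrow> \<iota> v (x + u) (\<iota> u x g) = \<iota> (u + v) x g) \<and>
     (\<forall>v x. \<iota> v x ` H x = H (x + v)) \<and>
     (\<forall>p x. p \<noteq> 0 \<longrightarrow> \<phi> p x \<in> iso (stk x) (stk (p *\<^sub>R x))) \<and>
     (\<forall>p x. p \<noteq> 0 \<longrightarrow> \<phi> p x ` H x = H (p *\<^sub>R x)) \<and>
     (\<forall>p v x g. p \<noteq> 0 \<and> g \<in> carrier (stk x) \<longrightarrow>
        \<iota> (p *\<^sub>R v) (p *\<^sub>R x) (\<phi> p x g) = \<phi> p (x + v) (\<iota> v x g))"
  using eq unfolding equivariant_coset_sheaf_def by (elim conjE) (intro conjI)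

lemma eq1: "subsheaf_of_subgroups stk sec H" using eq_all by (elim conjE)
lemma eq2: "\<forall>U f. open U \<and> sec U f \<longrightarrow>
        (\<forall>K. compact K \<and> K \<subseteq> U \<longrightarrow> finite ({x\<in>U. f x \<notin> H x} \<inter> K))" using eq_all by (elim conjE)
lemma eq3: "\<forall>v x. \<iota> v x \<in> iso (stk x) (stk (x + v))" using eq_all by (elim conjE)
lemma eq4: "\<forall>u v x g. g \<in> carrier (stk x) \<longrightarrow> \<iota> v (x + u) (\<iota> u x g) = \<iota> (u + v) x g" using eq_all by (elim conjE)
lemma eq5: "\<forall>v x. \<iota> v x ` H x = H (x + v)" using eq_all by (elim conjE)
lemma eq6: "\<forall>p x. p \<noteq> 0 \<longrightarrow> \<phi> p x \<in> iso (stk x) (stk (p *\<^sub>R x))" using eq_all by (elim conjE)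
lemma eq7: "\<forall>p x. p \<noteq> 0 \<longrightarrow> \<phi> p x ` H x = H (p *\<^sub>R x)" using eq_all by (elim conjE)
lemma eq8: "\<forall>p v x g. p \<noteq> 0 \<and> g \<in> carrier (stk x) \<longrightarrow>
        \<iota> (p *\<^sub>R v) (p *\<^sub>R x) (\<phi> p x g) = \<phi> p (x + v) (\<iota> v x g)" using eq_all by (elim conjE)

lemma subgrp: "subgroup (H x) (stk x)"
  using eq1 unfolding subsheaf_of_subgroups_def by (elim conjE) simp

lemma H_carr: "H x \<subseteq> carrier (stk x)" using subgroup.subset[OF subgrp] .

lemma dis: "open U \<Longrightarrow> sec U f \<Longrightarrow> compact K \<Longrightarrow> K \<subseteq> U \<Longrightarrow> finite ({x\<in>U. f x \<notin> H x} \<inter> K)"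
  using eq2 by blast

lemma iota_iso: "\<iota> v x \<in> iso (stk x) (stk (x + v))"
  using eq3 by blast

lemma iota_hom: "\<iota> v x \<in> hom (stk x) (stk (x + v))"
  using iota_iso unfolding iso_def by simp

lemma iota_inj: "inj_on (\<iota> v x) (carrier (stk x))"
  using iota_iso unfolding iso_def bij_betw_def by simp

lemma iota_carr: "g \<in> carrier (stk x) \<Longrightarrow> \<iota> v x g \<in> carrier (stk (x + v))"
  using iota_hom unfolding hom_def by (simp add: Pi_iff)

lemma iota_comp: "g \<in> carrier (stk x) \<Longrightarrow> \<iota> v (x + u) (\<iota> u x g) = \<iota> (u + v) x g"
  using eq4 by blast

lemma iota_comp': "g \<in> carrier (stk x) \<Longrightarrow> y = x + u \<Longrightarrow> w = u + v \<Longrightarrow> \<iota> v y (\<iota> u x g) = \<iota> w x g"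
  using iota_comp by simp

lemma iota_compS: "X \<subseteq> carrier (stk x) \<Longrightarrow> y = x + u \<Longrightarrow> w = u + v \<Longrightarrow> \<iota> v y ` \<iota> u x ` X = \<iota> w x ` X"
  unfolding image_image by (rule image_cong) (auto intro: iota_comp')

lemma iota_H: "\<iota> v x ` H x = H (x + v)"
  using eq5 by blast

lemma iota0: "g \<in> carrier (stk x) \<Longrightarrow> \<iota> 0 x g = g"
proof -
  assume g: "g \<in> carrier (stk x)"
  have "\<iota> 0 x (\<iota> 0 x g) = \<iota> 0 x g" using iota_comp[OF g, of 0 0] by simp
  moreover have "\<iota> 0 x g \<in> carrier (stk x)" using iota_carr[OF g, of 0] by simp
  ultimately show ?thesis using inj_onD[OF iota_inj[of 0 x]] g by simp
qed

lemma iota0S: "X \<subseteq> carrier (stk x) \<Longrightarrow> \<iota> 0 x ` X = X"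
  using iota0 by (auto simp: subset_iff image_iff)

lemma iota_carrS: "X \<subseteq> carrier (stk x) \<Longrightarrow> y = x + v \<Longrightarrow> \<iota> v x ` X \<subseteq> carrier (stk y)"
  using iota_carr by auto

lemma phi_iso: "p \<noteq> 0 \<Longrightarrow> \<phi> p x \<in> iso (stk x) (stk (p *\<^sub>R x))"
  using eq6 by blast

lemma phi_hom: "p \<noteq> 0 \<Longrightarrow> \<phi> p x \<in> hom (stk x) (stk (p *\<^sub>R x))"
  using phi_iso unfolding iso_def by simp

lemma phi_inj: "p \<noteq> 0 \<Longrightarrow> inj_on (\<phi> p x) (carrier (stk x))"
  using phi_iso unfolding iso_def bij_betw_def by simp

lemma phi_carr: "p \<noteq> 0 \<Longrightarrow> g \<in> carrier (stk x) \<Longrightarrow> \<phi> p x g \<in> carrier (stk (p *\<^sub>R x))"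
  using phi_hom unfolding hom_def by (simp add: Pi_iff)

lemma phi_H: "p \<noteq> 0 \<Longrightarrow> \<phi> p x ` H x = H (p *\<^sub>R x)"
  using eq7 by blast

lemma compat: "p \<noteq> 0 \<Longrightarrow> g \<in> carrier (stk x) \<Longrightarrow>
        \<iota> (p *\<^sub>R v) (p *\<^sub>R x) (\<phi> p x g) = \<phi> p (x + v) (\<iota> v x g)"
  using eq8 by blast

end

context ecs
begin

definition iscos :: "'v \<Rightarrow> 'g set \<Rightarrow> bool" where
  "iscos x X \<longleftrightarrow> (\<exists>g\<in>carrier (stk x). X = l_coset (stk x) g (H x))"

lemma lcos_sub: "g \<in> carrier (stk x) \<Longrightarrow> l_coset (stk x) g (H x) \<subseteq> carrier (stk x)"
  using group.l_coset_subset_G[OF grp H_carr] by simp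

lemma iscos_sub: "iscos x X \<Longrightarrow> X \<subseteq> carrier (stk x)"
  unfolding iscos_def using lcos_sub by auto

lemma cs_iscos: "coset_section stk sec H UNIV s \<Longrightarrow> iscos x (s x)"
proof -
  assume "coset_section stk sec H UNIV s"
  hence "\<exists>W f. open W \<and> x \<in> W \<and> W \<subseteq> UNIV \<and> sec W f \<and>
        (\<forall>y\<in>W. s y = l_coset (stk y) (f y) (H y))"
    unfolding coset_section_def by simp
  then obtain W f where W: "open W" "x \<in> W" "sec W f" "\<forall>y\<in>W. s y = l_coset (stk y) (f y) (H y)"
    by auto
  have "f x \<in> carrier (stk x)" using sec_carr[OF W(1,3,2)] .
  moreover have "s x = l_coset (stk x) (f x) (H x)" using W(2,4) by simp
  ultimately show ?thesis unfolding iscos_def by auto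
qed

lemma iota_iscos: "iscos x X \<Longrightarrow> y = x + v \<Longrightarrow> iscos y (\<iota> v x ` X)"
proof -
  assume "iscos x X" and y: "y = x + v"
  then obtain g where g: "g \<in> carrier (stk x)" "X = l_coset (stk x) g (H x)" unfolding iscos_def by blast
  have "\<iota> v x ` X = l_coset (stk (x+v)) (\<iota> v x g) (\<iota> v x ` H x)"
    using hom_lcos[OF iota_hom g(1) H_carr] g by simp
  also have "\<dots> = l_coset (stk (x+v)) (\<iota> v x g) (H (x + v))" by (simp add: iota_H)
  finally show ?thesis using y iota_carr[OF g(1)] unfolding iscos_def by blast
qed

lemma H_iscos: "iscos x (H x)"
proof -
  have "l_coset (stk x) \<one>\<^bsub>stk x\<^esub> (H x) = H x"
    using lcos_H_iff2[OF grp subgrp subgroup.one_closed[OF subgrp]] .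
  moreover have "\<one>\<^bsub>stk x\<^esub> \<in> carrier (stk x)" using group.is_monoid[OF grp] monoid.one_closed by blast
  ultimately show ?thesis unfolding iscos_def by (intro bexI[of _ "\<one>\<^bsub>stk x\<^esub>"]) auto
qed

lemma iscos_triv_iff: "g \<in> carrier (stk x) \<Longrightarrow> (l_coset (stk x) g (H x) = H x) \<longleftrightarrow> g \<in> H x"
  using lcos_H_iff[OF grp subgrp] by simp

definition R :: "('v \<Rightarrow> 'g set) \<Rightarrow> 'v \<Rightarrow> 'v \<Rightarrow> bool" where
  "R s y y' \<longleftrightarrow> s y' = \<iota> (y' - y) y ` s y"

lemma R_refl: "s y \<subseteq> carrier (stk y) \<Longrightarrow> R s y y"
  unfolding R_def by (simp add: iota0S)

lemma R_sym: assumes "\<And>x. s x \<subseteq> carrier (stk x)" "R s y y'" shows "R s y' y"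
proof -
  have "\<iota> (y - y') y' ` s y' = \<iota> (y - y') y' ` \<iota> (y' - y) y ` s y" using assms(2) unfolding R_def by simp
  also have "\<dots> = \<iota> 0 y ` s y" by (rule iota_compS[OF assms(1)]) auto
  also have "\<dots> = s y" by (simp add: iota0S assms(1))
  finally show ?thesis unfolding R_def by simp
qed

lemma R_trans: assumes "\<And>x. s x \<subseteq> carrier (stk x)" "R s a b" "R s b c" shows "R s a c"
proof -
  have "s c = \<iota> (c - b) b ` \<iota> (b - a) a ` s a" using assms(2,3) unfolding R_def by simp
  also have "\<dots> = \<iota> (c - a) a ` s a" by (rule iota_compS[OF assms(1)]) auto
  finally show ?thesis unfolding R_def by simp
qed

lemma R_triv: "s y = H y \<Longrightarrow> s y' = H y' \<Longrightarrow> R s y y'"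
  unfolding R_def by (simp add: iota_H)

lemma loc_disc:
  assumes "open W" "sec W h" "x \<in> W"
  shows "\<exists>r>0. ball x r \<subseteq> W \<and> (\<forall>y\<in>ball x r. y \<noteq> x \<longrightarrow> h y \<in> H y)"
proof -
  have "\<exists>e>0. cball x e \<subseteq> W" using assms(1,3) unfolding open_contains_cball by auto
  then obtain e where e: "e > 0" "cball x e \<subseteq> W" by auto
  have fin: "finite ({y\<in>W. h y \<notin> H y} \<inter> cball x e)"
    using dis[OF assms(1,2) compact_cball e(2)] .
  obtain d where d: "d > 0" "\<And>y. y \<in> {y\<in>W. h y \<notin> H y} \<inter> cball x e \<Longrightarrow> y \<noteq> x \<Longrightarrow> d \<le> dist x y"
    using finite_set_avoid[OF fin, of x] by auto
  define r where "r = min d e"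
  have r0: "r > 0" using d e r_def by simp
  have rb: "ball x r \<subseteq> W" using e r_def by auto
  have "h y \<in> H y" if y: "y \<in> ball x r" "y \<noteq> x" for y
  proof (rule ccontr)
    assume hy: "h y \<notin> H y"
    have "y \<in> W" using y rb by auto
    moreover have "y \<in> cball x e" using y r_def by auto
    ultimately have "d \<le> dist x y" using d(2)[of y] hy y(2) by simp
    moreover have "dist x y < d" using y r_def by auto
    ultimately show False by simp
  qed
  thus ?thesis using r0 rb by auto
qed

end

section \<open>Lattices\<close>

lemma lat0: "lattice L \<Longrightarrow> 0 \<in> L" unfolding lattice_def by simp
lemma lat_diff: "lattice L \<Longrightarrow> a \<in> L \<Longrightarrow> b \<in> L \<Longrightarrow> a - b \<in> L" unfolding lattice_def by simp
lemma lat_neg: assumes "lattice L" "b \<in> L" shows "- b \<in> L"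
  using lat_diff[OF assms(1) lat0[OF assms(1)] assms(2)] by simp
lemma lat_add: assumes "lattice L" "a \<in> L" "b \<in> L" shows "a + b \<in> L"
  using lat_diff[OF assms(1,2) lat_neg[OF assms(1,3)]] by simp

lemma lat_nat: assumes L: "lattice L" and a: "a \<in> L" shows "real n *\<^sub>R a \<in> L"
proof (induction n)
  case 0 then show ?case using lat0[OF L] by simp
next
  case (Suc n)
  have "real (Suc n) *\<^sub>R a = real n *\<^sub>R a + a" by (simp add: algebra_simps)
  then show ?case using lat_add[OF L Suc a] by simp
qed

lemma lat_int: assumes L: "lattice L" and a: "a \<in> L" shows "real_of_int k *\<^sub>R a \<in> L"
proof (cases "k \<ge> 0")
  case True
  define n where "n = nat k"
  have "k = int n" using True n_def by simp
  then show ?thesis using lat_nat[OF L a, of n] by simp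
next
  case False
  define n where "n = nat (- k)"
  have "k = - int n" using False n_def by simp
  then show ?thesis using lat_neg[OF L lat_nat[OF L a, of n]] by simp
qed

lemma lat_pow: "lattice L \<Longrightarrow> a \<in> L \<Longrightarrow> (real P ^ n) *\<^sub>R a \<in> L"
  using lat_nat[of L a "P ^ n"] by simp

lemma lat_sum: assumes L: "lattice L" and fin: "finite B" and f: "\<And>b. b \<in> B \<Longrightarrow> f b \<in> L"
  shows "sum f B \<in> L"
  using fin f
proof (induction B rule: finite_induct)
  case empty then show ?case using lat0[OF L] by simp
next
  case (insert x F) then show ?case using lat_add[OF L] by simp
qed

lemma lat_disc0: "lattice L \<Longrightarrow> \<exists>e>0. \<forall>y\<in>L. norm y < e \<longrightarrow> y = 0"
  unfolding lattice_def by (metis dist_0_norm dist_commute)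

lemma lat_pow_div:
  assumes L: "lattice L" and P: "P \<ge> 2" and w: "\<And>n. inverse (real P ^ n) *\<^sub>R w \<in> L"
  shows "w = 0"
proof -
  obtain e where e: "e > 0" "\<forall>y\<in>L. norm y < e \<longrightarrow> y = 0" using lat_disc0[OF L] by auto
  have "1 < real P" using P by simp
  then obtain n where n: "norm w / e < real P ^ n" using real_arch_pow[of "real P" "norm w / e"] by auto
  have pn: "real P ^ n > 0" using P by simp
  have "norm (inverse (real P ^ n) *\<^sub>R w) = norm w / real P ^ n" using pn by (simp add: field_simps)
  also have "\<dots> < e" using n e(1) pn by (simp add: field_simps)
  finally have "inverse (real P ^ n) *\<^sub>R w = 0" using e(2) w[of n] by auto
  thus ?thesis using pn P by simp
qed

lemma lat_nonzero:
  assumes L: "lattice L" shows "\<exists>l\<in>L. l \<noteq> (0::'v::euclidean_space)"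
proof (rule ccontr)
  assume "\<not> ?thesis"
  hence "L \<subseteq> {0}" by auto
  hence "span L \<subseteq> span {0}" by (rule span_mono)
  hence "(UNIV::'v set) \<subseteq> {0}" using L unfolding lattice_def by simp
  moreover obtain b :: 'v where "b \<in> Basis" using nonempty_Basis by (meson ex_in_conv)
  ultimately show False using nonzero_Basis by auto
qed

lemma lat_cover:
  assumes L: "lattice (L::'v::euclidean_space set)"
  shows "\<exists>Rr. \<forall>v. \<exists>l\<in>L. norm (v - l) \<le> Rr"
proof -
  obtain B where B: "B \<subseteq> L" "independent B" "L \<subseteq> span B" by (rule maximal_independent_subset)
  have fB: "finite B" using finiteI_independent[OF B(2)] .
  have "span L \<subseteq> span B" using span_mono[OF B(3)] by (simp add: span_span)
  hence spB: "span B = UNIV" using L unfolding lattice_def by auto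
  have "\<exists>l\<in>L. norm (v - l) \<le> (\<Sum>b\<in>B. norm b)" for v
  proof -
    have "v \<in> span B" using spB by simp
    then obtain u where u: "v = (\<Sum>b\<in>B. u b *\<^sub>R b)" using span_finite[OF fB] by auto
    define l where "l = (\<Sum>b\<in>B. real_of_int \<lfloor>u b\<rfloor> *\<^sub>R b)"
    have lL: "l \<in> L" unfolding l_def
    proof (rule lat_sum[OF L fB])
      fix b assume "b \<in> B" thus "real_of_int \<lfloor>u b\<rfloor> *\<^sub>R b \<in> L" using lat_int[OF L] B(1) by auto
    qed
    have "v - l = (\<Sum>b\<in>B. (u b - real_of_int \<lfloor>u b\<rfloor>) *\<^sub>R b)"
      unfolding u l_def by (simp add: sum_subtractf scaleR_diff_left)
    hence "norm (v - l) \<le> (\<Sum>b\<in>B. norm ((u b - real_of_int \<lfloor>u b\<rfloor>) *\<^sub>R b))"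
      using norm_sum by metis
    also have "\<dots> \<le> (\<Sum>b\<in>B. norm b)"
    proof (rule sum_mono)
      fix b assume "b \<in> B"
      have "0 \<le> u b - real_of_int \<lfloor>u b\<rfloor>" "u b - real_of_int \<lfloor>u b\<rfloor> \<le> 1" by linarith+
      thus "norm ((u b - real_of_int \<lfloor>u b\<rfloor>) *\<^sub>R b) \<le> norm b"
        by (simp add: mult_left_le_one_le)
    qed
    finally show ?thesis using lL by auto
  qed
  thus ?thesis by auto
qed

section \<open>One functional equation\<close>

locale ecs_sol = ecs +
  fixes L :: "'a set" and P :: nat and s :: "'a \<Rightarrow> 'b set" and C :: "'a \<Rightarrow> 'b"
  assumes lat: "lattice L" and P2: "P \<ge> 2" and s_cs: "coset_section stk sec H UNIV s"
    and Csec: "sec UNIV C" and Cper: "\<forall>l\<in>L. pull_t_G \<iota> l C = C"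
    and sC: "pull_m_F \<phi> (real P) s = act_F stk C s"
begin

lemma Pnz: "real P \<noteq> 0" using P2 by simp
lemma Ppos: "real P > 0" using P2 by simp

lemma s_iscos: "iscos x (s x)" using cs_iscos[OF s_cs] .
lemma s_sub: "s x \<subseteq> carrier (stk x)" using iscos_sub[OF s_iscos] .

lemma eqn: "\<phi> (real P) (inverse (real P) *\<^sub>R x) ` s (inverse (real P) *\<^sub>R x) = l_coset (stk x) (C x) (s x)"
  using fun_cong[OF sC, of x] unfolding pull_m_F_def act_F_def by simp

lemma C_carr: "C x \<in> carrier (stk x)" using sec_carr[OF open_UNIV Csec] by simp

lemma Cper': "l \<in> L \<Longrightarrow> \<iota> l y (C y) = C (y + l)"
proof -
  assume l: "l \<in> L"
  have "pull_t_G \<iota> l C (y + l) = C (y + l)" using Cper l by simp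
  thus ?thesis unfolding pull_t_G_def by simp
qed

lemma descent1:
  assumes yy: "y' - y \<in> L"
  shows "R s y y' \<longleftrightarrow> R s (inverse (real P) *\<^sub>R y) (inverse (real P) *\<^sub>R y')"
proof -
  define p where "p = real P"
  have p0: "p \<noteq> 0" using Pnz p_def by simp
  define w where "w = inverse p *\<^sub>R y"
  define w' where "w' = inverse p *\<^sub>R y'"
  have pw: "p *\<^sub>R w = y" "p *\<^sub>R w' = y'" using p0 w_def w'_def by auto
  have pv: "p *\<^sub>R (w' - w) = y' - y" using pw by (simp add: scaleR_diff_right)
  have wv: "w + (w' - w) = w'" by simp
  have key: "\<iota> (y' - y) y ` \<phi> p w ` s w = \<phi> p w' ` \<iota> (w' - w) w ` s w"
    unfolding image_image
  proof (rule image_cong[OF refl])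
    fix g assume g: "g \<in> s w"
    hence gc: "g \<in> carrier (stk w)" using s_sub by blast
    have "\<iota> (p *\<^sub>R (w' - w)) (p *\<^sub>R w) (\<phi> p w g) = \<phi> p (w + (w' - w)) (\<iota> (w' - w) w g)"
      using compat[OF p0 gc] .
    thus "\<iota> (y' - y) y (\<phi> p w g) = \<phi> p w' (\<iota> (w' - w) w g)" using pv pw wv by simp
  qed
  have e1: "\<phi> p w ` s w = l_coset (stk y) (C y) (s y)" using eqn[of y] p_def w_def by simp
  have e2: "\<phi> p w' ` s w' = l_coset (stk y') (C y') (s y')" using eqn[of y'] p_def w'_def by simp
  have yv: "y + (y' - y) = y'" by simp
  have e3: "\<iota> (y' - y) y ` l_coset (stk y) (C y) (s y) = l_coset (stk y') (C y') (\<iota> (y' - y) y ` s y)"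
  proof -
    have "\<iota> (y' - y) y ` l_coset (stk y) (C y) (s y)
        = l_coset (stk (y + (y' - y))) (\<iota> (y' - y) y (C y)) (\<iota> (y' - y) y ` s y)"
      using hom_lcos[OF iota_hom C_carr s_sub] .
    also have "\<iota> (y' - y) y (C y) = C y'" using Cper'[OF yy, of y] by simp
    finally show ?thesis using yv by simp
  qed
  have star: "\<phi> p w' ` \<iota> (w' - w) w ` s w = l_coset (stk y') (C y') (\<iota> (y' - y) y ` s y)"
    using key e1 e3 by simp
  have sub1: "\<iota> (w' - w) w ` s w \<subseteq> carrier (stk w')" using iota_carrS[OF s_sub wv[symmetric]] .
  have sub2: "\<iota> (y' - y) y ` s y \<subseteq> carrier (stk y')" using iota_carrS[OF s_sub yv[symmetric]] .
  show ?thesis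
  proof
    assume "R s y y'"
    hence "s y' = \<iota> (y' - y) y ` s y" unfolding R_def .
    hence "\<phi> p w' ` \<iota> (w' - w) w ` s w = \<phi> p w' ` s w'" using star e2 by simp
    hence "\<iota> (w' - w) w ` s w = s w'" using inj_on_image_eq_iff[OF phi_inj[OF p0] sub1 s_sub] by simp
    thus "R s (inverse (real P) *\<^sub>R y) (inverse (real P) *\<^sub>R y')" unfolding R_def w_def w'_def p_def by simp
  next
    assume "R s (inverse (real P) *\<^sub>R y) (inverse (real P) *\<^sub>R y')"
    hence "s w' = \<iota> (w' - w) w ` s w" unfolding R_def w_def w'_def p_def by simp
    hence "l_coset (stk y') (C y') (s y') = l_coset (stk y') (C y') (\<iota> (y' - y) y ` s y)"
      using star e2 by simp
    hence "s y' = \<iota> (y' - y) y ` s y" using lcos_cancel[OF grp C_carr s_sub sub2] by simp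
    thus "R s y y'" unfolding R_def .
  qed
qed

lemma descent:
  assumes "l \<in> L" "y' - y = (real P ^ n) *\<^sub>R l"
  shows "R s y y' \<longleftrightarrow> R s (inverse (real P ^ n) *\<^sub>R y) (inverse (real P ^ n) *\<^sub>R y')"
  using assms(2)
proof (induction n arbitrary: y y')
  case 0 then show ?case by simp
next
  case (Suc n)
  have yyL: "y' - y \<in> L" using Suc.prems lat_pow[OF lat assms(1), of P "Suc n"] by simp
  have "inverse (real P) *\<^sub>R y' - inverse (real P) *\<^sub>R y = (real P ^ n) *\<^sub>R l"
    using Suc.prems Pnz by (simp add: scaleR_diff_right[symmetric] field_simps)
  hence "R s (inverse (real P) *\<^sub>R y) (inverse (real P) *\<^sub>R y') \<longleftrightarrow>
     R s (inverse (real P ^ n) *\<^sub>R (inverse (real P) *\<^sub>R y)) (inverse (real P ^ n) *\<^sub>R (inverse (real P) *\<^sub>R y'))"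
    using Suc.IH by blast
  moreover have "inverse (real P ^ n) *\<^sub>R (inverse (real P) *\<^sub>R z) = inverse (real P ^ Suc n) *\<^sub>R z" for z :: 'a
    unfolding scaleR_scaleR by (simp add: mult.commute)
  ultimately show ?case using descent1[OF yyL] by (simp add: mult.commute)
qed

end

context ecs
begin

lemma get_lift: "coset_section stk sec H UNIV s \<Longrightarrow>
   \<exists>W f. open W \<and> x \<in> W \<and> sec W f \<and> (\<forall>y\<in>W. s y = l_coset (stk y) (f y) (H y))"
proof -
  assume "coset_section stk sec H UNIV s"
  hence "\<exists>W f. open W \<and> x \<in> W \<and> W \<subseteq> UNIV \<and> sec W f \<and>
        (\<forall>y\<in>W. s y = l_coset (stk y) (f y) (H y))"
    unfolding coset_section_def by simp
  thus ?thesis by auto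
qed

end

context ecs_sol
begin

lemma S_near0: "\<exists>r>0. \<forall>z. z \<noteq> 0 \<longrightarrow> norm z < r \<longrightarrow> s z = H z"
proof -
  obtain W f where W: "open W" "0 \<in> W" "sec W f" "\<forall>y\<in>W. s y = l_coset (stk y) (f y) (H y)"
    using get_lift[OF s_cs, of 0] by auto
  obtain r where r: "r > 0" "ball 0 r \<subseteq> W" "\<forall>y\<in>ball 0 r. y \<noteq> 0 \<longrightarrow> f y \<in> H y"
    using loc_disc[OF W(1,3,2)] by auto
  have "s z = H z" if z: "z \<noteq> 0" "norm z < r" for z
  proof -
    have zb: "z \<in> ball 0 r" using z by simp
    hence zW: "z \<in> W" using r(2) by auto
    have "f z \<in> H z" using r(3) zb z(1) by simp
    moreover have "f z \<in> carrier (stk z)" using sec_carr[OF W(1,3) zW] .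
    ultimately show ?thesis using W(4) zW iscos_triv_iff by simp
  qed
  thus ?thesis using r(1) by auto
qed

lemma S_desc:
  assumes z0: "z \<noteq> 0" and zS: "s z \<noteq> H z"
  shows "\<exists>k a. z = (real P ^ k) *\<^sub>R a \<and> C a \<notin> H a"
proof -
  obtain r where r: "r > 0" "\<forall>z. z \<noteq> 0 \<longrightarrow> norm z < r \<longrightarrow> s z = H z" using S_near0 by auto
  define zk where "zk k = inverse (real P ^ k) *\<^sub>R z" for k
  define Q where "Q k \<longleftrightarrow> s (zk k) = H (zk k)" for k
  have "1 < real P" using P2 by simp
  then obtain k where k: "norm z / r < real P ^ k" using real_arch_pow[of "real P" "norm z / r"] by auto
  have pk: "real P ^ k > 0" using Ppos by simp
  have "norm (zk k) = norm z / real P ^ k" unfolding zk_def using pk by (simp add: field_simps)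
  also have "\<dots> < r" using k r(1) pk by (simp add: field_simps)
  finally have "norm (zk k) < r" .
  moreover have "zk k \<noteq> 0" unfolding zk_def using z0 pk by simp
  ultimately have Qk: "Q k" unfolding Q_def using r(2) by simp
  define m where "m = (LEAST k. Q k)"
  have Qm: "Q m" unfolding m_def using LeastI[of Q k, OF Qk] .
  have m0: "m \<noteq> 0" using Qm zS unfolding Q_def zk_def by auto
  then obtain j where j: "m = Suc j" using not0_implies_Suc by auto
  have nQj: "\<not> Q j" using not_less_Least[of j Q] j m_def by simp
  define w where "w = zk j"
  have zw: "zk m = inverse (real P) *\<^sub>R w"
    unfolding w_def zk_def j by (simp add: mult.commute)
  have Pw: "real P *\<^sub>R (inverse (real P) *\<^sub>R w) = w" using Pnz by simp
  have CH: "C w \<notin> H w"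
  proof
    assume Cw: "C w \<in> H w"
    have "\<phi> (real P) (inverse (real P) *\<^sub>R w) ` s (inverse (real P) *\<^sub>R w) = l_coset (stk w) (C w) (s w)"
      using eqn[of w] .
    moreover have "s (inverse (real P) *\<^sub>R w) = H (inverse (real P) *\<^sub>R w)" using Qm zw unfolding Q_def by simp
    ultimately have "l_coset (stk w) (C w) (s w) = H w" using phi_H[OF Pnz] Pw by simp
    moreover obtain g where g: "g \<in> carrier (stk w)" "s w = l_coset (stk w) g (H w)"
      using s_iscos[of w] unfolding iscos_def by auto
    ultimately have "l_coset (stk w) (C w \<otimes>\<^bsub>stk w\<^esub> g) (H w) = H w"
      using group.lcos_m_assoc[OF grp H_carr C_carr g(1)] by simp
    hence Cg: "C w \<otimes>\<^bsub>stk w\<^esub> g \<in> H w"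
      using iscos_triv_iff monoid.m_closed[OF group.is_monoid[OF grp] C_carr g(1)] by simp
    have "inv\<^bsub>stk w\<^esub> C w \<otimes>\<^bsub>stk w\<^esub> (C w \<otimes>\<^bsub>stk w\<^esub> g) \<in> H w"
      using subgroup.m_closed[OF subgrp subgroup.m_inv_closed[OF subgrp Cw] Cg] .
    moreover have "inv\<^bsub>stk w\<^esub> C w \<otimes>\<^bsub>stk w\<^esub> (C w \<otimes>\<^bsub>stk w\<^esub> g) = g"
      using group.inv_solve_left'[OF grp g(1) C_carr monoid.m_closed[OF group.is_monoid[OF grp] C_carr g(1)]] by simp
    ultimately have "g \<in> H w" by simp
    hence "s w = H w" using g iscos_triv_iff by simp
    thus False using nQj unfolding Q_def w_def by simp
  qed
  have "z = (real P ^ j) *\<^sub>R w" unfolding w_def zk_def using Ppos by simp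
  thus ?thesis using CH by blast
qed

lemma CA_per: assumes "l \<in> L" "C a \<notin> H a" shows "C (a + l) \<notin> H (a + l)"
proof
  assume "C (a + l) \<in> H (a + l)"
  hence "\<iota> l a (C a) \<in> \<iota> l a ` H a" using Cper'[OF assms(1)] iota_H by simp
  hence "C a \<in> H a" using inj_on_image_mem_iff[OF iota_inj C_carr H_carr] by simp
  thus False using assms(2) by simp
qed

end

context ecs_sol
begin

lemma CA_fin: "\<exists>F. finite F \<and> (\<forall>a. C a \<notin> H a \<longrightarrow> (\<exists>f\<in>F. a - f \<in> L))"
proof -
  obtain Rr where Rr: "\<forall>v. \<exists>l\<in>L. norm (v - l) \<le> Rr" using lat_cover[OF lat] by auto
  define F where "F = {x\<in>UNIV. C x \<notin> H x} \<inter> cball 0 Rr"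
  have fin: "finite F" unfolding F_def using dis[OF open_UNIV Csec compact_cball subset_UNIV] .
  have "\<exists>f\<in>F. a - f \<in> L" if a: "C a \<notin> H a" for a
  proof -
    obtain l where l: "l \<in> L" "norm (a - l) \<le> Rr" using Rr by auto
    have "C (a + - l) \<notin> H (a + - l)" using CA_per[OF lat_neg[OF lat l(1)] a] .
    hence "a - l \<in> F" unfolding F_def using l(2) by (simp add: dist_norm norm_minus_commute)
    moreover have "a - (a - l) \<in> L" using l(1) by simp
    ultimately show ?thesis by blast
  qed
  thus ?thesis using fin by auto
qed

lemma pow_shift:
  assumes "m \<le> n"
  shows "(real P ^ (n - m)) * inverse (real P ^ n) = inverse (real P ^ m)"
proof -
  have "real P ^ n = real P ^ m * real P ^ (n - m)" using assms by (simp add: power_add[symmetric])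
  thus ?thesis using Pnz by (simp add: field_simps)
qed

lemma clean:
  assumes y0: "y \<noteq> 0"
  shows "\<exists>n. \<forall>l\<in>L. s (inverse (real P ^ n) *\<^sub>R y + l) = H (inverse (real P ^ n) *\<^sub>R y + l)"
proof -
  obtain F where F: "finite F" "\<forall>a. C a \<notin> H a \<longrightarrow> (\<exists>f\<in>F. a - f \<in> L)" using CA_fin by auto
  define Bf where "Bf f n \<longleftrightarrow> (\<exists>k. inverse (real P ^ n) *\<^sub>R y - (real P ^ k) *\<^sub>R f \<in> L)" for f n
  define B0 where "B0 n \<longleftrightarrow> inverse (real P ^ n) *\<^sub>R y \<in> L" for n
  have down: "Bf f m" if B: "Bf f n" and mn: "m \<le> n" for f m n
  proof -
    obtain k where k: "inverse (real P ^ n) *\<^sub>R y - (real P ^ k) *\<^sub>R f \<in> L" using B unfolding Bf_def by auto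
    have "(real P ^ (n - m)) *\<^sub>R (inverse (real P ^ n) *\<^sub>R y - (real P ^ k) *\<^sub>R f) \<in> L"
      using lat_pow[OF lat k] .
    moreover have "(real P ^ (n - m)) *\<^sub>R (inverse (real P ^ n) *\<^sub>R y - (real P ^ k) *\<^sub>R f)
       = inverse (real P ^ m) *\<^sub>R y - (real P ^ (k + (n - m))) *\<^sub>R f"
      using pow_shift[OF mn] by (simp add: scaleR_diff_right power_add mult.commute)
    ultimately show ?thesis unfolding Bf_def by auto
  qed
  have down0: "B0 m" if B: "B0 n" and mn: "m \<le> n" for m n
  proof -
    have "(real P ^ (n - m)) *\<^sub>R (inverse (real P ^ n) *\<^sub>R y) \<in> L"
      using lat_pow[OF lat B[unfolded B0_def]] .
    thus ?thesis unfolding B0_def using pow_shift[OF mn] by simp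
  qed
  have nall0: "\<not> (\<forall>n. B0 n)"
  proof
    assume "\<forall>n. B0 n"
    hence "y = 0" using lat_pow_div[OF lat P2, of y] unfolding B0_def by auto
    thus False using y0 by simp
  qed
  have nallf: "\<not> (\<forall>n. Bf f n)" for f
  proof
    assume "\<forall>n. Bf f n"
    hence "\<forall>n. \<exists>k. inverse (real P ^ n) *\<^sub>R y - (real P ^ k) *\<^sub>R f \<in> L" unfolding Bf_def by auto
    from choice[OF this] obtain kk where kk0: "\<forall>n. inverse (real P ^ n) *\<^sub>R y - (real P ^ kk n) *\<^sub>R f \<in> L"
      by (elim exE)
    have kk: "\<And>n. inverse (real P ^ n) *\<^sub>R y - (real P ^ kk n) *\<^sub>R f \<in> L" using kk0 by simp
    show False
    proof (cases "\<exists>n. kk n \<noteq> Suc (kk (Suc n))")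
      case True
      then obtain n where n: "kk n \<noteq> Suc (kk (Suc n))" by auto
      define N :: int where "N = int (P ^ Suc (kk (Suc n))) - int (P ^ kk n)"
      have N0: "N \<noteq> 0"
      proof
        assume "N = 0"
        hence "int (P ^ Suc (kk (Suc n))) = int (P ^ kk n)" unfolding N_def by linarith
        hence eqp: "P ^ Suc (kk (Suc n)) = P ^ kk n" by (rule iffD1[OF of_nat_eq_iff])
        have h1P: "1 < P" using P2 by simp
        have "Suc (kk (Suc n)) = kk n" using iffD1[OF power_inject_exp[OF h1P] eqp] .
        thus False using n by simp
      qed
      have d1: "inverse (real P ^ n) *\<^sub>R y - (real P ^ kk n) *\<^sub>R f \<in> L" using kk .
      have "(real P ^ 1) *\<^sub>R (inverse (real P ^ Suc n) *\<^sub>R y - (real P ^ kk (Suc n)) *\<^sub>R f) \<in> L"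
        using lat_pow[OF lat kk[of "Suc n"]] .
      moreover have "(real P ^ 1) *\<^sub>R (inverse (real P ^ Suc n) *\<^sub>R y - (real P ^ kk (Suc n)) *\<^sub>R f)
          = inverse (real P ^ n) *\<^sub>R y - (real P ^ Suc (kk (Suc n))) *\<^sub>R f"
        using pow_shift[of n "Suc n"] by (simp add: scaleR_diff_right)
      ultimately have d2: "inverse (real P ^ n) *\<^sub>R y - (real P ^ Suc (kk (Suc n))) *\<^sub>R f \<in> L" by simp
      have "(inverse (real P ^ n) *\<^sub>R y - (real P ^ kk n) *\<^sub>R f)
         - (inverse (real P ^ n) *\<^sub>R y - (real P ^ Suc (kk (Suc n))) *\<^sub>R f) \<in> L"
        using lat_diff[OF lat d1 d2] .
      moreover have "(inverse (real P ^ n) *\<^sub>R y - (real P ^ kk n) *\<^sub>R f)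
         - (inverse (real P ^ n) *\<^sub>R y - (real P ^ Suc (kk (Suc n))) *\<^sub>R f) = real_of_int N *\<^sub>R f"
        unfolding N_def by (simp add: scaleR_diff_left of_nat_power)
      ultimately have Nf: "real_of_int N *\<^sub>R f \<in> L" by simp
      have "inverse (real P ^ m) *\<^sub>R (real_of_int N *\<^sub>R y) \<in> L" for m
      proof -
        have "real_of_int N *\<^sub>R (inverse (real P ^ m) *\<^sub>R y - (real P ^ kk m) *\<^sub>R f)
            + (real P ^ kk m) *\<^sub>R (real_of_int N *\<^sub>R f) \<in> L"
          using lat_add[OF lat lat_int[OF lat kk[of m]] lat_pow[OF lat Nf]] .
        moreover have "real_of_int N *\<^sub>R (inverse (real P ^ m) *\<^sub>R y - (real P ^ kk m) *\<^sub>R f)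
            + (real P ^ kk m) *\<^sub>R (real_of_int N *\<^sub>R f) = inverse (real P ^ m) *\<^sub>R (real_of_int N *\<^sub>R y)"
          by (simp add: scaleR_diff_right mult.commute)
        ultimately show ?thesis by simp
      qed
      hence "real_of_int N *\<^sub>R y = 0" by (rule lat_pow_div[OF lat P2])
      thus False using N0 y0 by simp
    next
      case False
      hence kks: "\<And>n. kk n = Suc (kk (Suc n))" by blast
      have "kk 0 = kk n + n" for n
      proof (induction n)
        case 0 then show ?case by simp
      next
        case (Suc n) then show ?case using kks[of n] by simp
      qed
      from this[of "Suc (kk 0)"] show False by linarith
    qed
  qed
  have evf: "\<forall>f\<in>F. eventually (\<lambda>n. \<not> Bf f n) sequentially"
  proof
    fix f assume "f \<in> F"
    obtain n0 where "\<not> Bf f n0" using nallf[of f] by auto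
    hence "\<forall>n\<ge>n0. \<not> Bf f n" using down by (meson)
    thus "eventually (\<lambda>n. \<not> Bf f n) sequentially" unfolding eventually_sequentially by blast
  qed
  have ev0: "eventually (\<lambda>n. \<not> B0 n) sequentially"
  proof -
    obtain n0 where "\<not> B0 n0" using nall0 by auto
    hence "\<forall>n\<ge>n0. \<not> B0 n" using down0 by (meson)
    thus ?thesis unfolding eventually_sequentially by blast
  qed
  have "eventually (\<lambda>n. (\<forall>f\<in>F. \<not> Bf f n) \<and> \<not> B0 n) sequentially"
    using eventually_conj[OF eventually_ball_finite[OF F(1) evf] ev0] .
  then obtain n where n: "\<forall>f\<in>F. \<not> Bf f n" "\<not> B0 n"
    unfolding eventually_sequentially by auto
  have "s (inverse (real P ^ n) *\<^sub>R y + l) = H (inverse (real P ^ n) *\<^sub>R y + l)" if l: "l \<in> L" for l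
  proof (rule ccontr)
    define z where "z = inverse (real P ^ n) *\<^sub>R y + l"
    assume "s (inverse (real P ^ n) *\<^sub>R y + l) \<noteq> H (inverse (real P ^ n) *\<^sub>R y + l)"
    hence zS: "s z \<noteq> H z" unfolding z_def .
    show False
    proof (cases "z = 0")
      case True
      hence "inverse (real P ^ n) *\<^sub>R y = - l" unfolding z_def by (simp add: eq_neg_iff_add_eq_0)
      thus False using n(2) lat_neg[OF lat l] unfolding B0_def by simp
    next
      case False
      obtain k a where ka: "z = (real P ^ k) *\<^sub>R a" "C a \<notin> H a" using S_desc[OF False zS] by auto
      obtain f where f: "f \<in> F" "a - f \<in> L" using F(2) ka(2) by auto
      have "(real P ^ k) *\<^sub>R (a - f) - l \<in> L" using lat_diff[OF lat lat_pow[OF lat f(2)] l] .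
      moreover have "(real P ^ k) *\<^sub>R (a - f) - l = inverse (real P ^ n) *\<^sub>R y - (real P ^ k) *\<^sub>R f"
        using ka(1) unfolding z_def by (simp add: scaleR_diff_right algebra_simps)
      ultimately have "Bf f n" unfolding Bf_def by auto
      thus False using n(1) f(1) by auto
    qed
  qed
  thus ?thesis by auto
qed

end

context ecs
begin

lemma mod_cs:
  assumes cs: "coset_section stk sec H UNIV s" and X: "iscos x0 X"
  shows "coset_section stk sec H UNIV (s(x0 := X))"
  unfolding coset_section_def
proof
  fix x
  show "\<exists>W f. open W \<and> x \<in> W \<and> W \<subseteq> UNIV \<and> sec W f \<and>
          (\<forall>y\<in>W. (s(x0 := X)) y = l_coset (stk y) (f y) (H y))"
  proof (cases "x = x0")
    case False
    obtain W f where W: "open W" "x \<in> W" "sec W f" "\<forall>y\<in>W. s y = l_coset (stk y) (f y) (H y)"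
      using get_lift[OF cs, of x] by auto
    have o: "open (W - {x0})" using W(1) by (simp add: open_Diff)
    have "sec (W - {x0}) f" using sec_restr[OF W(1) o _ W(3)] by auto
    moreover have "x \<in> W - {x0}" using W(2) False by simp
    moreover have "\<forall>y\<in>W - {x0}. (s(x0 := X)) y = l_coset (stk y) (f y) (H y)" using W(4) by simp
    ultimately show ?thesis using o by blast
  next
    case True
    obtain g where g: "g \<in> carrier (stk x0)" "X = l_coset (stk x0) g (H x0)" using X unfolding iscos_def by auto
    obtain W1 f1 where W1: "open W1" "x0 \<in> W1" "sec W1 f1" "f1 x0 = g" using sec_stalk[OF g(1)] by auto
    obtain W2 f2 where W2: "open W2" "x0 \<in> W2" "sec W2 f2" "\<forall>y\<in>W2. s y = l_coset (stk y) (f2 y) (H y)"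
      using get_lift[OF cs, of x0] by auto
    define W where "W = W1 \<inter> W2"
    have oW: "open W" using W1(1) W2(1) W_def by (simp add: open_Int)
    have x0W: "x0 \<in> W" using W1(2) W2(2) W_def by simp
    have s1: "sec W f1" using sec_restr[OF W1(1) oW _ W1(3)] W_def by auto
    have s2: "sec W f2" using sec_restr[OF W2(1) oW _ W2(3)] W_def by auto
    define h where "h y = inv\<^bsub>stk y\<^esub> f2 y \<otimes>\<^bsub>stk y\<^esub> f1 y" for y
    have sh: "sec W h" unfolding h_def using sec_mult[OF oW sec_inv[OF oW s2] s1] .
    obtain r where r: "r > 0" "ball x0 r \<subseteq> W" "\<forall>y\<in>ball x0 r. y \<noteq> x0 \<longrightarrow> h y \<in> H y"
      using loc_disc[OF oW sh x0W] by auto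
    have sb: "sec (ball x0 r) f1" using sec_restr[OF oW open_ball r(2) s1] .
    have "(s(x0 := X)) y = l_coset (stk y) (f1 y) (H y)" if y: "y \<in> ball x0 r" for y
    proof (cases "y = x0")
      case True then show ?thesis using g W1(4) by simp
    next
      case False
      have yW: "y \<in> W" using y r(2) by auto
      have c1: "f1 y \<in> carrier (stk y)" using sec_carr[OF oW s1 yW] .
      have c2: "f2 y \<in> carrier (stk y)" using sec_carr[OF oW s2 yW] .
      have "h y \<in> H y" using r(3) y False by simp
      hence "l_coset (stk y) (f1 y) (H y) = l_coset (stk y) (f2 y) (H y)"
        using lcos_eq_of[OF grp subgrp c1 c2] unfolding h_def by simp
      moreover have "s y = l_coset (stk y) (f2 y) (H y)" using W2(4) yW W_def by simp
      ultimately show ?thesis using False by simp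
    qed
    thus ?thesis using True r(1) sb by (intro exI[of _ "ball x0 r"] exI[of _ f1]) auto
  qed
qed

end

context ecs_sol
begin

lemma eq_mod:
  assumes same: "\<And>x. x \<noteq> 0 \<Longrightarrow> s' x = s x" and Rs: "\<And>y y'. y' - y \<in> L \<Longrightarrow> R s' y y'"
    and mu: "\<mu> \<in> L" "\<mu> \<noteq> 0" and sub: "\<And>x. s' x \<subseteq> carrier (stk x)"
  shows "pull_m_F \<phi> (real P) s' = act_F stk C s'"
proof
  fix x
  show "pull_m_F \<phi> (real P) s' x = act_F stk C s' x"
  proof (cases "x = 0")
    case False
    hence "inverse (real P) *\<^sub>R x \<noteq> 0" using Pnz by simp
    thus ?thesis using False eqn[of x] same unfolding pull_m_F_def act_F_def by simp
  next
    case True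
    define p where "p = real P"
    have p0: "p \<noteq> 0" using Pnz p_def by simp
    define m where "m = p *\<^sub>R \<mu>"
    have m0: "m \<noteq> 0" using mu(2) p0 m_def by simp
    have mL: "- m \<in> L" unfolding m_def p_def using lat_neg[OF lat lat_nat[OF lat mu(1)]] .
    have s'0: "s' 0 = \<iota> (- \<mu>) \<mu> ` s \<mu>"
      using Rs[where y=\<mu> and y'=0] lat_neg[OF lat mu(1)] same[OF mu(2)] unfolding R_def by simp
    have s'0m: "s' 0 = \<iota> (- m) m ` s m"
      using Rs[where y=m and y'=0] mL same[OF m0] unfolding R_def by simp
    have step1: "\<phi> p 0 ` \<iota> (- \<mu>) \<mu> ` s \<mu> = \<iota> (- m) m ` \<phi> p \<mu> ` s \<mu>"
      unfolding image_image
    proof (rule image_cong[OF refl])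
      fix g assume "g \<in> s \<mu>"
      hence gc: "g \<in> carrier (stk \<mu>)" using s_sub by blast
      have "\<iota> (p *\<^sub>R - \<mu>) (p *\<^sub>R \<mu>) (\<phi> p \<mu> g) = \<phi> p (\<mu> + - \<mu>) (\<iota> (- \<mu>) \<mu> g)" using compat[OF p0 gc] .
      thus "\<phi> p 0 (\<iota> (- \<mu>) \<mu> g) = \<iota> (- m) m (\<phi> p \<mu> g)" unfolding m_def by simp
    qed
    have step2: "\<phi> p \<mu> ` s \<mu> = l_coset (stk m) (C m) (s m)"
      using eqn[of m] p0 unfolding m_def p_def by simp
    have step3: "\<iota> (- m) m ` l_coset (stk m) (C m) (s m) = l_coset (stk 0) (C 0) (\<iota> (- m) m ` s m)"
    proof -
      have "\<iota> (- m) m ` l_coset (stk m) (C m) (s m) = l_coset (stk (m + - m)) (\<iota> (- m) m (C m)) (\<iota> (- m) m ` s m)"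
        using hom_lcos[OF iota_hom C_carr s_sub] .
      moreover have "\<iota> (- m) m (C m) = C 0" using Cper'[OF mL, of m] by simp
      ultimately show ?thesis by simp
    qed
    have "\<phi> p 0 ` s' 0 = l_coset (stk 0) (C 0) (s' 0)"
      using s'0 s'0m step1 step2 step3 by simp
    thus ?thesis using True unfolding pull_m_F_def act_F_def p_def by simp
  qed
qed

end

locale ecs2 = P: ecs_sol stk sec H \<iota> \<phi> L p s A + Q: ecs_sol stk sec H \<iota> \<phi> L q s B
  for stk sec H \<iota> \<phi> L p s A q B +
  assumes cop: "coprime p q"
begin

lemma core:
  assumes y1: "y1 \<noteq> 0" and y2: "y2 \<noteq> 0" and yy: "y2 - y1 \<in> L"
  shows "P.R s y1 y2"
proof -
  obtain n where n: "\<forall>l\<in>L. s (inverse (real p ^ n) *\<^sub>R y2 + l) = H (inverse (real p ^ n) *\<^sub>R y2 + l)"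
    using P.clean[OF y2] by auto
  obtain n' where n': "\<forall>l\<in>L. s (inverse (real q ^ n') *\<^sub>R y1 + l) = H (inverse (real q ^ n') *\<^sub>R y1 + l)"
    using Q.clean[OF y1] by auto
  have cp: "coprime (int (p ^ n)) (int (q ^ n'))" using cop by simp
  have g1: "gcd (int (p ^ n)) (int (q ^ n')) = 1" using cp by simp
  obtain a b :: int where ab: "a * int (p ^ n) + b * int (q ^ n') = 1"
    using bezout_int[of "int (p ^ n)" "int (q ^ n')"] g1 by auto
  have "real_of_int (a * int (p ^ n) + b * int (q ^ n')) = 1" using ab by simp
  hence abr: "real_of_int a * real p ^ n + real_of_int b * real q ^ n' = 1" by simp
  define l where "l = y1 - y2"
  have lL: "l \<in> L" unfolding l_def using lat_neg[OF P.lat yy] by simp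
  define u2 where "u2 = y2 + (real_of_int a * real p ^ n) *\<^sub>R l"
  have aL: "real_of_int a *\<^sub>R l \<in> L" using lat_int[OF P.lat lL] .
  have d1: "u2 - y2 = (real p ^ n) *\<^sub>R (real_of_int a *\<^sub>R l)" unfolding u2_def by (simp add: mult.commute)
  have pn: "real p ^ n \<noteq> 0" using P.Pnz by simp
  have "P.R s y2 u2"
  proof -
    have e: "inverse (real p ^ n) *\<^sub>R u2 = inverse (real p ^ n) *\<^sub>R y2 + real_of_int a *\<^sub>R l"
      unfolding u2_def using pn by (simp add: scaleR_add_right)
    have "s (inverse (real p ^ n) *\<^sub>R y2 + 0) = H (inverse (real p ^ n) *\<^sub>R y2 + 0)"
      using n lat0[OF P.lat] by blast
    moreover have "s (inverse (real p ^ n) *\<^sub>R u2) = H (inverse (real p ^ n) *\<^sub>R u2)"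
      using n aL e by simp
    ultimately have "P.R s (inverse (real p ^ n) *\<^sub>R y2) (inverse (real p ^ n) *\<^sub>R u2)"
      using P.R_triv by simp
    thus ?thesis using P.descent[OF aL d1] by simp
  qed
  moreover have "P.R s y1 u2"
  proof -
    have ap: "real_of_int a * real p ^ n = 1 - real_of_int b * real q ^ n'" using abr by linarith
    have d2: "u2 - y1 = (real q ^ n') *\<^sub>R (- real_of_int b *\<^sub>R l)"
      unfolding u2_def ap l_def by (simp add: algebra_simps)
    have bL: "- real_of_int b *\<^sub>R l \<in> L" using lat_neg[OF P.lat lat_int[OF P.lat lL]] by simp
    have qn: "real q ^ n' \<noteq> 0" using Q.Pnz by simp
    have u2e: "u2 = y1 + (real q ^ n') *\<^sub>R (- real_of_int b *\<^sub>R l)" using d2 by (simp add: algebra_simps)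
    have "inverse (real q ^ n') *\<^sub>R u2 = inverse (real q ^ n') *\<^sub>R y1
        + inverse (real q ^ n') *\<^sub>R ((real q ^ n') *\<^sub>R (- real_of_int b *\<^sub>R l))"
      unfolding u2e by (rule scaleR_add_right)
    also have "inverse (real q ^ n') *\<^sub>R ((real q ^ n') *\<^sub>R (- real_of_int b *\<^sub>R l)) = - real_of_int b *\<^sub>R l"
      using qn by simp
    finally have e: "inverse (real q ^ n') *\<^sub>R u2 = inverse (real q ^ n') *\<^sub>R y1 + (- real_of_int b *\<^sub>R l)" .
    have "s (inverse (real q ^ n') *\<^sub>R y1 + 0) = H (inverse (real q ^ n') *\<^sub>R y1 + 0)"
      using n' lat0[OF P.lat] by blast
    moreover have "s (inverse (real q ^ n') *\<^sub>R u2) = H (inverse (real q ^ n') *\<^sub>R u2)"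
      unfolding e using bspec[OF n' bL] .
    ultimately have "P.R s (inverse (real q ^ n') *\<^sub>R y1) (inverse (real q ^ n') *\<^sub>R u2)"
      using P.R_triv by simp
    thus ?thesis using Q.descent[OF bL d2] by simp
  qed
  ultimately show ?thesis using P.R_sym P.R_trans P.s_sub by metis
qed

lemma final:
  "\<exists>s'. coset_section stk sec H UNIV s' \<and> (\<forall>x. x \<noteq> 0 \<longrightarrow> s' x = s x) \<and>
           (\<forall>l\<in>L. pull_t_F \<iota> l s' = s') \<and>
           pull_m_F \<phi> (real p) s' = act_F stk A s' \<and>
           pull_m_F \<phi> (real q) s' = act_F stk B s'"
proof -
  obtain \<mu> where mu: "\<mu> \<in> L" "\<mu> \<noteq> 0" using lat_nonzero[OF P.lat] by auto
  define X where "X = \<iota> (- \<mu>) \<mu> ` s \<mu>"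
  define s' where "s' = s(0 := X)"
  have Xc: "P.iscos 0 X" unfolding X_def by (rule P.iota_iscos[OF P.s_iscos]) simp
  have cs: "coset_section stk sec H UNIV s'" unfolding s'_def using P.mod_cs[OF P.s_cs Xc] .
  have same: "\<And>x. x \<noteq> 0 \<Longrightarrow> s' x = s x" unfolding s'_def by simp
  have sub: "\<And>x. s' x \<subseteq> carrier (stk x)"
  proof -
    fix x show "s' x \<subseteq> carrier (stk x)"
      using P.iscos_sub[OF Xc] P.s_sub[of x] unfolding s'_def by (cases "x = 0") auto
  qed
  have Rs: "P.R s' y y'" if yy: "y' - y \<in> L" for y y'
  proof (cases "y = 0")
    case y0: True
    show ?thesis
    proof (cases "y' = 0")
      case True with y0 show ?thesis using P.R_refl[of s' 0, OF sub[of 0]] by simp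
    next
      case False
      have "y' \<in> L" using yy y0 by simp
      hence "y' - \<mu> \<in> L" using lat_diff[OF P.lat _ mu(1)] by simp
      hence "P.R s \<mu> y'" using core[OF mu(2) False] by simp
      hence "s y' = \<iota> (y' - \<mu>) \<mu> ` s \<mu>" unfolding P.R_def .
      also have "\<dots> = \<iota> y' 0 ` \<iota> (- \<mu>) \<mu> ` s \<mu>"
        using P.iota_compS[OF P.s_sub, of 0 \<mu> "- \<mu>" "y' - \<mu>" y'] by simp
      finally show ?thesis unfolding P.R_def s'_def X_def using y0 False by simp
    qed
  next
    case y0: False
    show ?thesis
    proof (cases "y' = 0")
      case True
      have "- y \<in> L" using yy True by simp
      hence "y \<in> L" using lat_neg[OF P.lat] by fastforce
      hence "\<mu> - y \<in> L" using lat_diff[OF P.lat mu(1)] by simp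
      hence "P.R s y \<mu>" using core[OF y0 mu(2)] by simp
      hence "s \<mu> = \<iota> (\<mu> - y) y ` s y" unfolding P.R_def .
      hence "X = \<iota> (- \<mu>) \<mu> ` \<iota> (\<mu> - y) y ` s y" unfolding X_def by simp
      also have "\<dots> = \<iota> (- y) y ` s y"
        using P.iota_compS[OF P.s_sub, of \<mu> y "\<mu> - y" "- y" "- \<mu>"] by simp
      finally show ?thesis unfolding P.R_def s'_def using True y0 by simp
    next
      case False
      have "P.R s y y'" using core[OF y0 False yy] .
      thus ?thesis unfolding P.R_def s'_def using y0 False by simp
    qed
  qed
  have per: "\<forall>l\<in>L. pull_t_F \<iota> l s' = s'"
  proof
    fix l assume l: "l \<in> L"
    show "pull_t_F \<iota> l s' = s'"
    proof
      fix x
      have "P.R s' (x - l) x" using Rs[where y="x - l" and y'=x] l by simp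
      thus "pull_t_F \<iota> l s' x = s' x" unfolding P.R_def pull_t_F_def by simp
    qed
  qed
  have eA: "pull_m_F \<phi> (real p) s' = act_F stk A s'"
    by (rule P.eq_mod[OF same Rs mu sub])
  have eB: "pull_m_F \<phi> (real q) s' = act_F stk B s'"
    by (rule Q.eq_mod[OF same Rs mu sub])
  have same': "\<forall>x. x \<noteq> 0 \<longrightarrow> s' x = s x" using same by simp
  show ?thesis by (intro exI[of _ s'] conjI cs same' per eA eB)
qed

end


theorem theorem2p2:
  fixes stk :: "'v::euclidean_space \<Rightarrow> 'g monoid"
    and sec :: "'v set \<Rightarrow> ('v \<Rightarrow> 'g) \<Rightarrow> bool"
    and H :: "'v \<Rightarrow> 'g set"
    and \<iota> :: "'v \<Rightarrow> 'v \<Rightarrow> 'g \<Rightarrow> 'g"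
    and \<phi> :: "real \<Rightarrow> 'v \<Rightarrow> 'g \<Rightarrow> 'g"
    and L :: "'v set" and p q :: nat
    and s :: "'v \<Rightarrow> 'g set" and A B :: "'v \<Rightarrow> 'g"
  assumes eq: "equivariant_coset_sheaf stk sec H \<iota> \<phi>"
    and lat: "lattice L"
    and pq: "p \<ge> 2" "q \<ge> 2" "coprime p q"
    and s: "coset_section stk sec H UNIV s"
    and A: "sec UNIV A" "\<forall>l\<in>L. pull_t_G \<iota> l A = A"
    and B: "sec UNIV B" "\<forall>l\<in>L. pull_t_G \<iota> l B = B"
    and sA: "pull_m_F \<phi> (real p) s = act_F stk A s"
    and sB: "pull_m_F \<phi> (real q) s = act_F stk B s"
  shows "\<exists>s'. coset_section stk sec H UNIV s' \<and> (\<forall>x. x \<noteq> 0 \<longrightarrow> s' x = s x) \<and>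
           (\<forall>l\<in>L. pull_t_F \<iota> l s' = s') \<and>
           pull_m_F \<phi> (real p) s' = act_F stk A s' \<and>
           pull_m_F \<phi> (real q) s' = act_F stk B s'"
proof -
  interpret ecs2 stk sec H \<iota> \<phi> L p s A q B
    unfolding ecs2_def ecs2_axioms_def ecs_sol_def ecs_sol_axioms_def ecs_def
    using eq lat pq s A B sA sB by simp
  show ?thesis by (rule final)
qed

end
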